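(* Let $C$ be a linear completely regular $[n,k,2]_q$ code with covering radius $\rho=1$ and $k<n-1$, let $n_a$ be the number of codewords at distance one from any vector not in $C$, and let $X_1,\dots,X_{n/n_a}$ be a partition of $\{1,\dots,n\}$ into sets of size $n_a$ such that every weight-2 codeword of $C$ has support contained in one of the $X_j$. Let ${\bf x}=(x_1,\dots,x_n)\in C$ and let $X_j$ be one of these sets with $\mathrm{supp}({\bf x})\cap X_j\neq\emptyset$. Then there exists a codeword ${\bf x}'\in C$ which coincides with ${\bf x}$ in all positions outside $X_j$ and satisfies $|\mathrm{supp}({\bf x}')\cap X_j|\le 1$; moreover, in the case where such an ${\bf x}'$ has $|\mathrm{supp}({\bf x}')\cap X_j|=1$, for every position $i\in X_j$ there is such a codeword ${\bf x}'$ with $\mathrm{supp}({\bf x}')\cap X_j=\{i\}$.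
   Context: Hamming distance; $\mathrm{supp}({\bf v})$ is the set of nonzero coordinates of ${\bf v}$; covering radius $\rho=\max_{\bf v}\min_{{\bf x}\in C}d({\bf v},{\bf x})$. $C$ is completely regular if for every vector ${\bf x}$, with $t=d({\bf x},C)$, the number of codewords at distance $i$ from ${\bf x}$ depends only on $t$ and $i$. *)

theory Defs
  imports Main
begin

text \<open>q-ary vectors of length n over a finite field 'a, coordinates indexed by 1..n,
  represented as functions nat => 'a vanishing outside {1..n}.\<close>

definition vecs :: "nat \<Rightarrow> (nat \<Rightarrow> 'a::zero) set" where
  "vecs n = {v. \<forall>i. i \<notin> {1..n} \<longrightarrow> v i = 0}"

definition hdist :: "nat \<Rightarrow> (nat \<Rightarrow> 'a) \<Rightarrow> (nat \<Rightarrow> 'a) \<Rightarrow> nat" where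
  "hdist n x y = card {i \<in> {1..n}. x i \<noteq> y i}"

definition supp :: "nat \<Rightarrow> (nat \<Rightarrow> 'a::zero) \<Rightarrow> nat set" where
  "supp n v = {i \<in> {1..n}. v i \<noteq> 0}"

definition wt :: "nat \<Rightarrow> (nat \<Rightarrow> 'a::zero) \<Rightarrow> nat" where
  "wt n v = card (supp n v)"

definition linear_code :: "nat \<Rightarrow> (nat \<Rightarrow> 'a::field) set \<Rightarrow> bool" where
  "linear_code n C \<longleftrightarrow> C \<subseteq> vecs n \<and> (\<lambda>_. 0) \<in> C \<and>
     (\<forall>x\<in>C. \<forall>y\<in>C. (\<lambda>i. x i + y i) \<in> C) \<and>
     (\<forall>a. \<forall>x\<in>C. (\<lambda>i. a * x i) \<in> C)"

definition min_dist_eq :: "nat \<Rightarrow> (nat \<Rightarrow> 'a) set \<Rightarrow> nat \<Rightarrow> bool" where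
  "min_dist_eq n C d \<longleftrightarrow> (\<exists>x\<in>C. \<exists>y\<in>C. x \<noteq> y \<and> hdist n x y = d) \<and>
     (\<forall>x\<in>C. \<forall>y\<in>C. x \<noteq> y \<longrightarrow> d \<le> hdist n x y)"

text \<open>An [n,k,d]_q linear code (q = card of the field type 'a).\<close>
definition lin_code_nkd :: "nat \<Rightarrow> nat \<Rightarrow> nat \<Rightarrow> (nat \<Rightarrow> 'a::{field,finite}) set \<Rightarrow> bool" where
  "lin_code_nkd n k d C \<longleftrightarrow> linear_code n C \<and> card C = card (UNIV :: 'a set) ^ k \<and> min_dist_eq n C d"

definition dist_code :: "nat \<Rightarrow> (nat \<Rightarrow> 'a) \<Rightarrow> (nat \<Rightarrow> 'a) set \<Rightarrow> nat" where
  "dist_code n v C = Min {hdist n v x | x. x \<in> C}"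

definition covering_radius :: "nat \<Rightarrow> (nat \<Rightarrow> 'a::zero) set \<Rightarrow> nat" where
  "covering_radius n C = Max {dist_code n v C | v. v \<in> vecs n}"

definition completely_regular :: "nat \<Rightarrow> (nat \<Rightarrow> 'a::zero) set \<Rightarrow> bool" where
  "completely_regular n C \<longleftrightarrow>
     (\<forall>x\<in>vecs n. \<forall>y\<in>vecs n. dist_code n x C = dist_code n y C \<longrightarrow>
        (\<forall>i. card {c\<in>C. hdist n x c = i} = card {c\<in>C. hdist n y c = i}))"

end

theory Submission
  imports Defs
begin

lemma pair_codeword:
  fixes C :: "(nat \<Rightarrow> 'a::{field,finite}) set"
  assumes lin: "linear_code n C"
    and md2: "\<forall>x\<in>C. \<forall>y\<in>C. x \<noteq> y \<longrightarrow> 2 \<le> hdist n x y"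
    and finC: "finite C"
    and na: "\<forall>v\<in>vecs n - C. card {c\<in>C. hdist n v c = 1} = na"
    and part_union: "\<Union>P = {1..n}"
    and part_disj: "\<forall>X\<in>P. \<forall>Y\<in>P. X \<noteq> Y \<longrightarrow> X \<inter> Y = {}"
    and part_card: "\<forall>X\<in>P. card X = na"
    and wt2: "\<forall>c\<in>C. wt n c = 2 \<longrightarrow> (\<exists>X\<in>P. supp n c \<subseteq> X)"
    and XjP: "Xj \<in> P" and iX: "i \<in> Xj" and lX: "l \<in> Xj" and li: "l \<noteq> i"
  shows "\<exists>c\<in>C. c i = 1 \<and> supp n c = {i,l}"
proof -
  define e :: "nat \<Rightarrow> 'a" where "e = (\<lambda>m. if m = i then 1 else 0)"
  have iN: "i \<in> {1..n}" using part_union XjP iX by blast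
  have z: "(\<lambda>_. 0) \<in> C" using lin unfolding linear_code_def by blast
  have Cv: "C \<subseteq> vecs n" using lin unfolding linear_code_def by blast
  have ev: "e \<in> vecs n" unfolding vecs_def e_def using iN by auto
  have "{m\<in>{1..n}. e m \<noteq> 0} = {i}" using iN by (auto simp: e_def)
  hence he0: "hdist n e (\<lambda>_. 0) = 1" unfolding hdist_def by simp
  have "e \<noteq> (\<lambda>_. 0)" unfolding e_def by (metis one_neq_zero)
  have "e \<notin> C"
  proof
    assume "e \<in> C"
    hence "2 \<le> hdist n e (\<lambda>_. 0)" using md2 z \<open>e \<noteq> (\<lambda>_. 0)\<close> by blast
    thus False using he0 by simp
  qed
  define A where "A = {c\<in>C. hdist n e c = 1}"
  have cardA: "card A = na" using na ev \<open>e \<notin> C\<close> unfolding A_def by blast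
  have finA: "finite A" using finC unfolding A_def by simp
  have zA: "(\<lambda>_. 0) \<in> A" using z he0 unfolding A_def by simp
  have key: "c i = 1 \<and> (\<exists>j. j \<noteq> i \<and> j \<in> Xj \<and> supp n c = {i,j})"
    if cA: "c \<in> A" and cnz: "c \<noteq> (\<lambda>_. 0)" for c
  proof -
    have cC: "c \<in> C" and hd: "hdist n e c = 1" using cA unfolding A_def by auto
    have cv: "\<And>m. m \<notin> {1..n} \<Longrightarrow> c m = 0" using cC Cv unfolding vecs_def by blast
    have "card {m\<in>{1..n}. e m \<noteq> c m} = 1" using hd unfolding hdist_def .
    then obtain j where D: "{m\<in>{1..n}. e m \<noteq> c m} = {j}"
      by (rule card_1_singletonE)
    show ?thesis
    proof (cases "j = i")
      case True
      have "{m\<in>{1..n}. c m \<noteq> 0} \<subseteq> {i}"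
      proof
        fix m assume m: "m \<in> {m\<in>{1..n}. c m \<noteq> 0}"
        show "m \<in> {i}"
        proof (rule ccontr)
          assume "m \<notin> {i}"
          hence "m \<notin> {m\<in>{1..n}. e m \<noteq> c m}" using D True by auto
          thus False using m \<open>m \<notin> {i}\<close> by (auto simp: e_def)
        qed
      qed
      hence "card {m\<in>{1..n}. c m \<noteq> 0} \<le> card {i}" by (intro card_mono) simp_all
      hence "card {m\<in>{1..n}. c m \<noteq> 0} \<le> 1" by simp
      hence "hdist n c (\<lambda>_. 0) \<le> 1" unfolding hdist_def by simp
      moreover have "2 \<le> hdist n c (\<lambda>_. 0)" using md2 cC z cnz by blast
      ultimately show ?thesis by simp
    next
      case False
      have jN: "j \<in> {1..n}" and ej: "e j \<noteq> c j" using D by blast+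
      have "i \<notin> {m\<in>{1..n}. e m \<noteq> c m}" using D False by auto
      hence ci: "c i = 1" using iN by (auto simp: e_def)
      have cj: "c j \<noteq> 0" using ej False by (simp add: e_def)
      have oth: "c m = 0" if "m \<noteq> i" "m \<noteq> j" for m
      proof (cases "m \<in> {1..n}")
        case True
        hence "m \<notin> {m\<in>{1..n}. e m \<noteq> c m}" using D that by auto
        thus ?thesis using True that by (auto simp: e_def)
      next
        case False thus ?thesis using cv by blast
      qed
      have sc: "supp n c = {i,j}"
        unfolding supp_def using iN jN ci cj oth by auto
      hence "wt n c = 2" unfolding wt_def using False by simp
      then obtain X where XP: "X \<in> P" and sX: "supp n c \<subseteq> X" using wt2 cC by blast
      have "i \<in> X" using sX sc by auto
      hence "X = Xj" using part_disj XP XjP iX by blast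
      hence "j \<in> Xj" using sX sc by auto
      thus ?thesis using ci sc False by blast
    qed
  qed
  define f where "f c = (if supp n c - {i} = {} then i else Min (supp n c - {i}))" for c :: "nat \<Rightarrow> 'a"
  have f0: "f (\<lambda>_. 0) = i" unfolding f_def supp_def by simp
  have fj: "f c = j" if "supp n c = {i,j}" "j \<noteq> i" for c j
  proof -
    have "supp n c - {i} = {j}" using that by auto
    thus ?thesis unfolding f_def by simp
  qed
  have fA: "f ` A \<subseteq> Xj"
  proof
    fix y assume "y \<in> f ` A"
    then obtain c where cA: "c \<in> A" and y: "y = f c" by blast
    show "y \<in> Xj"
    proof (cases "c = (\<lambda>_. 0)")
      case True thus ?thesis using y f0 iX by simp
    next
      case False
      then obtain j where "j \<noteq> i" "j \<in> Xj" "supp n c = {i,j}" using key cA by blast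
      thus ?thesis using y fj by simp
    qed
  qed
  have inj: "inj_on f A"
  proof
    fix c c' assume cA: "c \<in> A" and cA': "c' \<in> A" and eq: "f c = f c'"
    show "c = c'"
    proof (cases "c = (\<lambda>_. 0)")
      case True
      show ?thesis
      proof (rule ccontr)
        assume "c \<noteq> c'"
        hence "c' \<noteq> (\<lambda>_. 0)" using True by simp
        then obtain j where "j \<noteq> i" "supp n c' = {i,j}" using key cA' by blast
        thus False using eq True f0 fj by simp
      qed
    next
      case False
      then obtain j where j: "j \<noteq> i" "supp n c = {i,j}" and ci: "c i = 1" using key cA by blast
      have c'nz: "c' \<noteq> (\<lambda>_. 0)" using eq f0 fj j by auto
      then obtain j' where j': "j' \<noteq> i" "supp n c' = {i,j'}" and ci': "c' i = 1" using key cA' by blast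
      have "j = j'" using eq fj j j' by simp
      have cC: "c \<in> C" "c' \<in> C" using cA cA' unfolding A_def by auto
      have "{m\<in>{1..n}. c m \<noteq> c' m} \<subseteq> {j}"
      proof
        fix m assume m: "m \<in> {m\<in>{1..n}. c m \<noteq> c' m}"
        show "m \<in> {j}"
        proof (rule ccontr)
          assume "m \<notin> {j}"
          hence "m \<noteq> j" by simp
          show False
          proof (cases "m = i")
            case True thus False using m ci ci' by simp
          next
            case False
            hence "m \<notin> supp n c" "m \<notin> supp n c'" using j j' \<open>m \<noteq> j\<close> \<open>j = j'\<close> by auto
            thus False using m unfolding supp_def by auto
          qed
        qed
      qed
      hence "card {m\<in>{1..n}. c m \<noteq> c' m} \<le> card {j}" by (intro card_mono) simp_all
      hence "card {m\<in>{1..n}. c m \<noteq> c' m} \<le> 1" by simp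
      hence "hdist n c c' \<le> 1" unfolding hdist_def by simp
      show ?thesis
      proof (rule ccontr)
        assume "c \<noteq> c'"
        hence "2 \<le> hdist n c c'" using md2 cC by blast
        thus False using \<open>hdist n c c' \<le> 1\<close> by simp
      qed
    qed
  qed
  have "card A \<ge> 1" using finA zA by (metis One_nat_def Suc_leI card_gt_0_iff empty_iff)
  hence finX: "finite Xj" using part_card XjP cardA by (metis card.infinite not_one_le_zero)
  have "card (f ` A) = card Xj" using card_image[OF inj] cardA part_card XjP by simp
  hence "f ` A = Xj" using card_subset_eq[OF finX fA] by simp
  then obtain c where cA: "c \<in> A" and fc: "f c = l" using lX by blast
  have "c \<noteq> (\<lambda>_. 0)" using fc f0 li by auto
  then obtain j where "j \<noteq> i" "supp n c = {i,j}" and "c i = 1" using key cA by blast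
  moreover have "j = l" using fc fj \<open>j \<noteq> i\<close> \<open>supp n c = {i,j}\<close> by simp
  ultimately show ?thesis using cA unfolding A_def by blast
qed



lemma card_le1: "A \<subseteq> {j} \<Longrightarrow> card A \<le> 1"
proof -
  assume "A \<subseteq> {j}"
  hence "card A \<le> card {j}" by (intro card_mono) simp_all
  thus ?thesis by simp
qed

theorem lemma3p8:
  fixes C :: "(nat \<Rightarrow> 'a::{field,finite}) set"
    and n k na :: nat
    and P :: "nat set set"
    and x :: "nat \<Rightarrow> 'a"
    and Xj :: "nat set"
  assumes code: "lin_code_nkd n k 2 C"
    and cr: "completely_regular n C"
    and rho: "covering_radius n C = 1"
    and kn: "k < n - 1"
    and na: "\<forall>v\<in>vecs n - C. card {c\<in>C. hdist n v c = 1} = na"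
    and part_union: "\<Union>P = {1..n}"
    and part_disj: "\<forall>X\<in>P. \<forall>Y\<in>P. X \<noteq> Y \<longrightarrow> X \<inter> Y = {}"
    and part_card: "\<forall>X\<in>P. card X = na"
    and wt2: "\<forall>c\<in>C. wt n c = 2 \<longrightarrow> (\<exists>X\<in>P. supp n c \<subseteq> X)"
    and xC: "x \<in> C"
    and XjP: "Xj \<in> P"
    and meet: "supp n x \<inter> Xj \<noteq> {}"
  shows "(\<exists>x'\<in>C. (\<forall>i. i \<notin> Xj \<longrightarrow> x' i = x i) \<and> card (supp n x' \<inter> Xj) \<le> 1) \<and>
         ((\<exists>x'\<in>C. (\<forall>i. i \<notin> Xj \<longrightarrow> x' i = x i) \<and> card (supp n x' \<inter> Xj) = 1) \<longrightarrow>
          (\<forall>i\<in>Xj. \<exists>x'\<in>C. (\<forall>l. l \<notin> Xj \<longrightarrow> x' l = x l) \<and> supp n x' \<inter> Xj = {i}))"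
proof -
  have lin: "linear_code n C" and cardC: "card C = card (UNIV :: 'a set) ^ k"
    and md: "min_dist_eq n C 2" using code unfolding lin_code_nkd_def by auto
  have md2: "\<forall>x\<in>C. \<forall>y\<in>C. x \<noteq> y \<longrightarrow> 2 \<le> hdist n x y" using md unfolding min_dist_eq_def by blast
  have "card C > 0" using cardC by (simp add: finite_UNIV_card_ge_0)
  hence finC: "finite C" using card_gt_0_iff by blast
  have Cv: "C \<subseteq> vecs n" using lin unfolding linear_code_def by blast
  have addC: "\<And>u v. u \<in> C \<Longrightarrow> v \<in> C \<Longrightarrow> (\<lambda>i. u i + v i) \<in> C"
    and smC: "\<And>a u. u \<in> C \<Longrightarrow> (\<lambda>i. a * u i) \<in> C"
    and zC: "(\<lambda>_. 0) \<in> C" using lin unfolding linear_code_def by blast+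
  have XN: "Xj \<subseteq> {1..n}" using part_union XjP by blast
  have pc: "\<exists>c\<in>C. c i = 1 \<and> supp n c = {i,l}" if "i \<in> Xj" "l \<in> Xj" "l \<noteq> i" for i l
    using pair_codeword[OF lin md2 finC na part_union part_disj part_card wt2 XjP that] .
  have elim: "\<exists>y\<in>C. (\<forall>m. m \<notin> S \<and> m \<noteq> i \<longrightarrow> y m = x m) \<and> (\<forall>l\<in>S. y l = 0)"
    if iX: "i \<in> Xj" and "finite S" "S \<subseteq> Xj - {i}" for i S
    using that(2,3)
  proof (induction S rule: finite_induct)
    case empty thus ?case using xC by blast
  next
    case (insert l S)
    then obtain y where yC: "y \<in> C" and y1: "\<forall>m. m \<notin> S \<and> m \<noteq> i \<longrightarrow> y m = x m"
      and y2: "\<forall>l\<in>S. y l = 0" by blast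
    have lX: "l \<in> Xj" "l \<noteq> i" using insert by auto
    obtain c where cC: "c \<in> C" and cl: "c l = 1" and sc: "supp n c = {l,i}" using pc[OF lX(1) iX] lX by auto
    have c0: "c m = 0" if "m \<noteq> l" "m \<noteq> i" for m
    proof (cases "m \<in> {1..n}")
      case True thus ?thesis using sc that unfolding supp_def by auto
    next
      case False thus ?thesis using cC Cv unfolding vecs_def by blast
    qed
    define y' where "y' = (\<lambda>m. y m + (- y l) * c m)"
    have "y' \<in> C" unfolding y'_def using addC[OF yC smC[OF cC]] .
    moreover have "\<forall>m. m \<notin> insert l S \<and> m \<noteq> i \<longrightarrow> y' m = x m"
      using y1 c0 unfolding y'_def by auto
    moreover have "\<forall>m\<in>insert l S. y' m = 0"
    proof
      fix m assume m: "m \<in> insert l S"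
      show "y' m = 0"
      proof (cases "m = l")
        case True thus ?thesis using cl unfolding y'_def by simp
      next
        case False
        hence "m \<in> S" "m \<noteq> i" using m insert by auto
        thus ?thesis using y2 c0 False unfolding y'_def by simp
      qed
    qed
    ultimately show ?case by blast
  qed
  have finX: "finite Xj" using XN finite_subset by blast
  have cons: "\<exists>y\<in>C. (\<forall>m. m \<notin> Xj \<longrightarrow> y m = x m) \<and> supp n y \<inter> Xj \<subseteq> {i}" if iX: "i \<in> Xj" for i
  proof -
    obtain y where yC: "y \<in> C" and y1: "\<forall>m. m \<notin> Xj - {i} \<and> m \<noteq> i \<longrightarrow> y m = x m"
      and y2: "\<forall>l\<in>Xj - {i}. y l = 0" using elim[OF iX _ subset_refl] finX by blast
    have "\<forall>m. m \<notin> Xj \<longrightarrow> y m = x m" using y1 iX by auto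
    moreover have "supp n y \<inter> Xj \<subseteq> {i}" using y2 unfolding supp_def by auto
    ultimately show ?thesis using yC by blast
  qed
  have part1: "\<exists>x'\<in>C. (\<forall>i. i \<notin> Xj \<longrightarrow> x' i = x i) \<and> card (supp n x' \<inter> Xj) \<le> 1"
  proof -
    obtain i where "i \<in> Xj" using meet by blast
    then obtain y where "y \<in> C" "\<forall>m. m \<notin> Xj \<longrightarrow> y m = x m" and ys: "supp n y \<inter> Xj \<subseteq> {i}"
      using cons by blast
    moreover have "card (supp n y \<inter> Xj) \<le> 1" using ys by (rule card_le1)
    ultimately show ?thesis by blast
  qed
  have part2: "\<forall>i\<in>Xj. \<exists>x'\<in>C. (\<forall>l. l \<notin> Xj \<longrightarrow> x' l = x l) \<and> supp n x' \<inter> Xj = {i}"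
    if "\<exists>x'\<in>C. (\<forall>i. i \<notin> Xj \<longrightarrow> x' i = x i) \<and> card (supp n x' \<inter> Xj) = 1"
  proof
    fix i assume iX: "i \<in> Xj"
    from that obtain z where zC': "z \<in> C" and z1: "\<forall>i. i \<notin> Xj \<longrightarrow> z i = x i"
      and z2: "card (supp n z \<inter> Xj) = 1" by blast
    from z2 obtain m where zm: "supp n z \<inter> Xj = {m}" by (rule card_1_singletonE)
    obtain y where yC: "y \<in> C" and y1: "\<forall>m. m \<notin> Xj \<longrightarrow> y m = x m"
      and y2: "supp n y \<inter> Xj \<subseteq> {i}" using cons[OF iX] by blast
    have iN: "i \<in> {1..n}" using iX XN by blast
    show "\<exists>x'\<in>C. (\<forall>l. l \<notin> Xj \<longrightarrow> x' l = x l) \<and> supp n x' \<inter> Xj = {i}"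
    proof (cases "y i = 0")
      case False
      hence "supp n y \<inter> Xj = {i}" using y2 iX iN unfolding supp_def by auto
      thus ?thesis using yC y1 by blast
    next
      case True
      have ys: "\<forall>p\<in>Xj. y p = 0"
      proof
        fix p assume pX: "p \<in> Xj"
        show "y p = 0"
        proof (rule ccontr)
          assume "y p \<noteq> 0"
          hence "p \<in> supp n y \<inter> Xj" using pX XN unfolding supp_def by auto
          hence "p = i" using y2 by blast
          thus False using True \<open>y p \<noteq> 0\<close> by simp
        qed
      qed
      define d where "d = (\<lambda>p. z p + (- 1) * y p)"
      have dC: "d \<in> C" unfolding d_def using addC[OF zC' smC[OF yC]] .
      have mX: "m \<in> Xj" and mN: "m \<in> {1..n}" and zmnz: "z m \<noteq> 0" using zm unfolding supp_def by auto
      have "d m \<noteq> 0" using zmnz ys mX unfolding d_def by simp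
      hence dnz: "d \<noteq> (\<lambda>_. 0)" by auto
      have "{p\<in>{1..n}. d p \<noteq> (\<lambda>_. 0) p} \<subseteq> {m}"
      proof
        fix p assume p: "p \<in> {p\<in>{1..n}. d p \<noteq> (\<lambda>_. 0) p}"
        show "p \<in> {m}"
        proof (rule ccontr)
          assume pm: "p \<notin> {m}"
          show False
          proof (cases "p \<in> Xj")
            case True
            hence "z p = 0" using pm p zm unfolding supp_def by auto
            thus False using p ys True unfolding d_def by simp
          next
            case False
            thus False using p z1 y1 unfolding d_def by simp
          qed
        qed
      qed
      hence "card {p\<in>{1..n}. d p \<noteq> (\<lambda>_. 0) p} \<le> 1" by (rule card_le1)
      hence "hdist n d (\<lambda>_. 0) \<le> 1" unfolding hdist_def .
      moreover have "2 \<le> hdist n d (\<lambda>_. 0)" using md2 dC zC dnz by blast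
      ultimately show ?thesis by simp
    qed
  qed
  show ?thesis using part1 part2 by (intro conjI impI)
qed

end
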